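(* Let ${\bf m}=(m_1,\ldots,m_n)$ be a tuple of positive integers, let $G({\bf m})$ be the graph on $[n+1]$ whose edges are $m_i$ copies of $(i,n+1)$ for each $i=1,\ldots,n$, and let $a_1,\ldots,a_n\in\mathbb{Z}_{\ge0}$. Then the normalized volume of $\mathcal{F}_{G({\bf m})}({\bf a})$, ${\bf a}=(a_1,\ldots,a_n,-\sum a_i)$, is \[ {\rm vol}\,\mathcal{F}_{G({\bf m})}({\bf a})=\binom{\#E(G({\bf m}))-n}{m_1-1,\ldots,m_n-1}a_1^{m_1-1}\cdots a_n^{m_n-1}. \]
   Context: $\mathcal{F}_H({\bf a})$ is the set of $f\in\mathbb{R}_{\ge0}^{E(H)}$ with outflow minus inflow at each vertex $k\le n$ equal to $a_k$. The normalized volume of a polytope in dimension $d=\#E(G({\bf m}))-n$ is $d!$ times its $d$-dimensional volume relative to the lattice of integer points in its affine hull (so that unimodular simplices have normalized volume $1$). *)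

theory Defs
  imports "HOL-Analysis.Analysis"
begin

(* A directed multigraph is given by a finite edge set E together with tail/head maps. *)

definition netflow :: "'e set \<Rightarrow> ('e \<Rightarrow> nat) \<Rightarrow> ('e \<Rightarrow> nat) \<Rightarrow> ('e \<Rightarrow> real) \<Rightarrow> nat \<Rightarrow> real" where
  "netflow E t h f k = (\<Sum>e\<in>{e\<in>E. t e = k}. f e) - (\<Sum>e\<in>{e\<in>E. h e = k}. f e)"

definition flow_polytope :: "'e set \<Rightarrow> ('e \<Rightarrow> nat) \<Rightarrow> ('e \<Rightarrow> nat) \<Rightarrow> nat \<Rightarrow> (nat \<Rightarrow> real) \<Rightarrow> ('e \<Rightarrow> real) set" where
  "flow_polytope E t h n a =
     {f \<in> extensional E. (\<forall>e\<in>E. 0 \<le> f e) \<and> (\<forall>k\<in>{1..n}. netflow E t h f k = a k)}"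

definition flow_dir :: "'e set \<Rightarrow> ('e \<Rightarrow> nat) \<Rightarrow> ('e \<Rightarrow> nat) \<Rightarrow> nat \<Rightarrow> ('e \<Rightarrow> real) set" where
  "flow_dir E t h n = {f \<in> extensional E. \<forall>k\<in>{1..n}. netflow E t h f k = 0}"

definition mat_map :: "nat \<Rightarrow> (nat \<Rightarrow> 'e \<Rightarrow> real) \<Rightarrow> 'e set \<Rightarrow> ('e \<Rightarrow> real) \<Rightarrow> (nat \<Rightarrow> real)" where
  "mat_map d M E f = restrict (\<lambda>j. \<Sum>e\<in>E. M j e * f e) {..<d}"

definition lattice_chart :: "nat \<Rightarrow> (nat \<Rightarrow> 'e \<Rightarrow> real) \<Rightarrow> 'e set \<Rightarrow> ('e \<Rightarrow> real) set \<Rightarrow> bool" where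
  "lattice_chart d M E V \<longleftrightarrow>
     bij_betw (mat_map d M E) V (PiE {..<d} (\<lambda>_. UNIV)) \<and>
     mat_map d M E ` {f \<in> V. \<forall>e\<in>E. f e \<in> \<int>} = PiE {..<d} (\<lambda>_. \<int>)"

definition rel_norm_volume :: "nat \<Rightarrow> 'e set \<Rightarrow> ('e \<Rightarrow> real) set \<Rightarrow> ('e \<Rightarrow> real) set \<Rightarrow> real" where
  "rel_norm_volume d E V P =
     fact d * measure (PiM {..<d} (\<lambda>_. lborel)) (mat_map d (SOME M. lattice_chart d M E V) E ` P)"

(* G(m): edges (i,j), i in [n], j in [m_i], the j-th copy of the edge (i, n+1) *)
definition Gm_edges :: "nat \<Rightarrow> (nat \<Rightarrow> nat) \<Rightarrow> (nat \<times> nat) set" where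
  "Gm_edges n m = {(i, j). i \<in> {1..n} \<and> j \<in> {1..m i}}"

definition Gm_tail :: "nat \<times> nat \<Rightarrow> nat" where "Gm_tail e = fst e"
definition Gm_head :: "nat \<Rightarrow> nat \<times> nat \<Rightarrow> nat" where "Gm_head n e = Suc n"

definition multinomial :: "nat \<Rightarrow> (nat \<Rightarrow> nat) \<Rightarrow> real" where
  "multinomial n k = fact (\<Sum>i=1..n. k i) / (\<Prod>i=1..n. fact (k i))"

end

theory Submission
  imports Defs
begin

definition LL :: "nat \<Rightarrow> (nat \<Rightarrow> real) measure" where
  "LL d = PiM {..<d} (\<lambda>_. lborel)"
definition transl :: "nat \<Rightarrow> (nat \<Rightarrow> real) \<Rightarrow> (nat \<Rightarrow> real) \<Rightarrow> (nat \<Rightarrow> real)" where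
  "transl d v x = restrict (\<lambda>i. v i + x i) {..<d}"

lemma space_LL: "space (LL d) = PiE {..<d} (\<lambda>_. UNIV)"
  by (simp add: LL_def space_PiM)

lemma sets_LL: "sets (LL d) = sets (PiM {..<d} (\<lambda>_. lborel))"
  by (simp add: LL_def)

lemma transl_meas: "transl d v \<in> measurable (LL d) (LL d)"
  unfolding transl_def LL_def by measurable

lemma lborel_plus_vimage: "A \<in> sets borel \<Longrightarrow> emeasure lborel ((+) (c::real) -` A) = emeasure lborel A"
proof -
  assume A: "A \<in> sets borel"
  have "emeasure (distr lborel borel ((+) c)) A = emeasure lborel A" by (simp add: lborel_distr_plus)
  then show ?thesis using A by (subst (asm) emeasure_distr) auto
qed

lemma distr_transl: "distr (LL d) (LL d) (transl d v) = LL d"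
proof -
  interpret product_sigma_finite "\<lambda>_. lborel :: real measure" by standard
  show ?thesis unfolding LL_def
  proof (rule PiM_eqI)
    fix A assume A: "\<And>i. i \<in> {..<d} \<Longrightarrow> A i \<in> sets (lborel :: real measure)"
    have eq: "transl d v -` PiE {..<d} A \<inter> space (PiM {..<d} (\<lambda>_. lborel)) = PiE {..<d} (\<lambda>i. (+) (v i) -` A i)"
      by (auto simp: transl_def space_PiM PiE_def Pi_def extensional_def)
    have ms: "(\<lambda>i. (+) (v i) -` A i) i \<in> sets lborel" if "i \<in> {..<d}" for i
    proof -
      have m: "(+) (v i) \<in> borel_measurable (borel::real measure)" by simp
      show ?thesis using measurable_sets[OF m, of "A i"] A[OF that] by simp
    qed
    show "emeasure (distr (PiM {..<d} (\<lambda>_. lborel)) (PiM {..<d} (\<lambda>_. lborel)) (transl d v)) (PiE {..<d} A)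
       = (\<Prod>i\<in>{..<d}. emeasure lborel (A i))"
    proof -
      have "emeasure (distr (PiM {..<d} (\<lambda>_. lborel)) (PiM {..<d} (\<lambda>_. lborel)) (transl d v)) (PiE {..<d} A)
        = emeasure (PiM {..<d} (\<lambda>_. lborel)) (PiE {..<d} (\<lambda>i. (+) (v i) -` A i))"
        using A transl_meas[of d v] eq by (subst emeasure_distr) (auto simp: LL_def)
      also have "\<dots> = (\<Prod>i\<in>{..<d}. emeasure lborel ((+) (v i) -` A i))"
        using ms by (intro emeasure_PiM) auto
      also have "\<dots> = (\<Prod>i\<in>{..<d}. emeasure lborel (A i))"
        using A by (intro prod.cong refl lborel_plus_vimage) auto
      finally show ?thesis .
    qed
  qed auto
qed


definition dyI :: "nat \<Rightarrow> int \<Rightarrow> real set" where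
  "dyI k j = {real_of_int j / 2^k ..< (real_of_int j + 1) / 2^k}"

lemma dyI_iff: "x \<in> dyI k j \<longleftrightarrow> \<lfloor>x * 2^k\<rfloor> = j"
  by (simp add: dyI_def floor_eq_iff field_simps)

lemma floor_pow_div:
  assumes "k \<le> K"
  shows "\<lfloor>(x::real) * 2^k\<rfloor> = \<lfloor>x * 2^K\<rfloor> div 2^(K-k)"
proof -
  have "(2::real)^K = 2^k * 2^(K-k)" using assms by (simp add: power_add[symmetric])
  then have e: "x * 2^k = (x * 2^K) / real_of_int (2^(K-k))" by simp
  have "\<lfloor>(x * 2^K) / real_of_int (2^(K-k))\<rfloor> = \<lfloor>x * 2^K\<rfloor> div 2^(K-k)"
    by (rule floor_divide_real_eq_div) simp
  then show ?thesis by (simp only: e)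
qed

lemma dyI_iff_fine:
  assumes "k \<le> K"
  shows "x \<in> dyI k j \<longleftrightarrow> (\<exists>t\<in>{0..<2^(K-k)}. x \<in> dyI K (j * 2^(K-k) + t))"
proof -
  define n where "n = \<lfloor>x * 2^K\<rfloor>"
  define p :: int where "p = 2^(K-k)"
  have p: "p > 0" by (simp add: p_def)
  have "x \<in> dyI k j \<longleftrightarrow> n div p = j"
    using floor_pow_div[OF assms, of x] by (simp add: dyI_iff n_def p_def)
  also have "\<dots> \<longleftrightarrow> (\<exists>t\<in>{0..<p}. n = j * p + t)"
  proof
    assume "n div p = j" then show "\<exists>t\<in>{0..<p}. n = j * p + t"
      using p by (intro bexI[of _ "n mod p"]) (auto simp: mult.commute)
  next
    assume "\<exists>t\<in>{0..<p}. n = j * p + t"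
    then obtain t where "t \<in> {0..<p}" "n = j * p + t" by blast
    then show "n div p = j" using p by simp
  qed
  also have "\<dots> \<longleftrightarrow> (\<exists>t\<in>{0..<2^(K-k)}. x \<in> dyI K (j * 2^(K-k) + t))"
    by (simp add: dyI_iff n_def p_def)
  finally show ?thesis .
qed

lemma dyI_disj: "j \<noteq> j' \<Longrightarrow> dyI K j \<inter> dyI K j' = {}"
  by (auto simp: dyI_iff)

definition Dy :: "real set set" where
  "Dy = range (\<lambda>(k, j). dyI k j) \<union> {{}}"

lemma dyI_Int: "dyI k j \<inter> dyI k' j' \<in> Dy"
proof -
  have main: "dyI k j \<inter> dyI k' j' \<in> Dy" if "k \<le> k'" for k j k' j'
  proof (cases "j' div 2^(k'-k) = j")
    case True
    have "dyI k' j' \<subseteq> dyI k j"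
      using floor_pow_div[OF that] True by (auto simp: dyI_iff)
    then have "dyI k j \<inter> dyI k' j' = dyI k' j'" by blast
    then show ?thesis by (auto simp: Dy_def)
  next
    case False
    have "dyI k j \<inter> dyI k' j' = {}"
      using floor_pow_div[OF that] False by (auto simp: dyI_iff)
    then show ?thesis by (auto simp: Dy_def)
  qed
  show ?thesis
  proof (cases "k \<le> k'")
    case True then show ?thesis using main by blast
  next
    case False then show ?thesis using main[of k' k j' j] by (simp add: Int_commute)
  qed
qed

lemma Dy_Int:
  assumes "A \<in> Dy" "B \<in> Dy" shows "A \<inter> B \<in> Dy"
proof -
  consider (e) "A = {} \<or> B = {}" | (n) k j k' j' where "A = dyI k j" "B = dyI k' j'"
    using assms by (auto simp: Dy_def)
  then show ?thesis
  proof cases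
    case e then show ?thesis by (auto simp: Dy_def)
  next
    case n then show ?thesis using dyI_Int by simp
  qed
qed

lemma sets_sigma_Dy: "sets (sigma UNIV Dy) = sigma_sets UNIV Dy"
  by (rule sets_measure_of) auto

lemma sets_lborel_Dy: "sets (borel :: real measure) = sigma_sets UNIV Dy"
proof -
  interpret S: sigma_algebra "UNIV::real set" "sigma_sets UNIV Dy"
    by (rule sigma_algebra_sigma_sets) simp
  have "borel = sigma UNIV (id ` Dy)"
  proof (rule borel_eq_sigmaI1[OF borel_Iio])
    fix X :: "real set" assume "X \<in> range lessThan"
    then obtain a where a: "X = {..<a}" by auto
    define C where "C = (\<lambda>(k, j). dyI k j) ` {(k, j). (real_of_int j + 1) / 2^k \<le> a}"
    have "countable C" unfolding C_def by (intro countable_image) auto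
    moreover have "C \<subseteq> sigma_sets UNIV Dy"
      unfolding C_def Dy_def by (auto intro: sigma_sets.Basic)
    ultimately have "\<Union>C \<in> sigma_sets UNIV Dy" by (rule S.countable_Union)
    moreover have "\<Union>C = {..<a}"
    proof (intro equalityI subsetI)
      fix x assume "x \<in> \<Union>C"
      then obtain k j where "x \<in> dyI k j" "(real_of_int j + 1) / 2^k \<le> a" by (auto simp: C_def)
      then show "x \<in> {..<a}" by (auto simp: dyI_def)
    next
      fix x assume "x \<in> {..<a}"
      then have "0 < a - x" by simp
      then obtain k where k: "(1/2::real)^k < a - x"
        using real_arch_pow_inv[of "a - x" "1/2"] by auto
      define j where "j = \<lfloor>x * 2^k\<rfloor>"
      have xj: "x \<in> dyI k j" by (simp add: dyI_iff j_def)
      have "real_of_int j \<le> x * 2^k" by (simp add: j_def)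
      then have "(real_of_int j + 1) / 2^k \<le> x + 1/2^k" by (simp add: field_simps)
      also have "\<dots> \<le> a" using k by (simp add: power_divide)
      finally show "x \<in> \<Union>C" using xj by (auto simp: C_def)
    qed
    ultimately show "X \<in> sets (sigma UNIV (id ` Dy))" using a by simp
  next
    fix i assume "i \<in> Dy"
    then show "id i \<in> sets borel" by (auto simp: Dy_def dyI_def)
  qed
  then show ?thesis using sets_sigma_Dy by simp
qed

definition Gd :: "nat \<Rightarrow> (nat \<Rightarrow> real) set set" where
  "Gd d = {PiE {..<d} A | A. A \<in> Pi {..<d} (\<lambda>_. Dy)}"

lemma sets_LL_Gd: "sets (LL d) = sigma_sets (space (LL d)) (Gd d)"
proof -
  have "sets (LL d) = sets (PiM {..<d} (\<lambda>_. sigma UNIV Dy))"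
    unfolding LL_def by (rule sets_PiM_cong) (auto simp: sets_lborel_Dy sets_sigma_Dy)
  also have "\<dots> = sets (sigma (PiE {..<d} (\<lambda>_. UNIV))
      {{f\<in>(PiE {..<d} (\<lambda>_. UNIV)). \<forall>i\<in>j. f i \<in> A i} | A j. j \<in> {{..<d}} \<and> A \<in> Pi j (\<lambda>_. Dy)})"
  proof (rule sets_PiM_sigma)
    fix i :: nat
    show "\<exists>S\<subseteq>Dy. countable S \<and> UNIV = \<Union>S"
    proof (intro exI conjI)
      show "range (dyI 0) \<subseteq> Dy" by (auto simp: Dy_def)
      show "countable (range (dyI 0))" by simp
      show "UNIV = \<Union>(range (dyI 0))" by (auto simp: dyI_iff)
    qed
  qed auto
  also have "{{f\<in>(PiE {..<d} (\<lambda>_. UNIV)). \<forall>i\<in>j. f i \<in> A i} | A j. j \<in> {{..<d}} \<and> A \<in> Pi j (\<lambda>_. Dy)}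
     = Gd d"
    unfolding Gd_def by (auto simp: PiE_def Pi_def)
  also have "sets (sigma (PiE {..<d} (\<lambda>_. UNIV)) (Gd d)) = sigma_sets (space (LL d)) (Gd d)"
    by (subst sets_measure_of) (auto simp: Gd_def space_LL PiE_def Pi_def)
  finally show ?thesis .
qed

lemma Gd_Int_stable: "Int_stable (Gd d)"
proof (rule Int_stableI)
  fix X Y assume "X \<in> Gd d" "Y \<in> Gd d"
  then obtain A B where "X = PiE {..<d} A" "A \<in> Pi {..<d} (\<lambda>_. Dy)" "Y = PiE {..<d} B" "B \<in> Pi {..<d} (\<lambda>_. Dy)"
    by (auto simp: Gd_def)
  then show "X \<inter> Y \<in> Gd d"
    unfolding Gd_def by (intro CollectI exI[of _ "\<lambda>i. A i \<inter> B i"]) (auto simp: PiE_Int Dy_Int Pi_iff)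
qed


lemma transl_image_eq:
  assumes "A \<subseteq> space (LL d)"
  shows "transl d v ` A = transl d (\<lambda>i. - v i) -` A \<inter> space (LL d)"
proof (intro equalityI subsetI)
  fix y assume "y \<in> transl d v ` A"
  then obtain x where x: "x \<in> A" "y = transl d v x" by auto
  have "transl d (\<lambda>i. - v i) y = x" using x assms
    by (auto simp: transl_def space_LL fun_eq_iff PiE_def extensional_def)
  then show "y \<in> transl d (\<lambda>i. - v i) -` A \<inter> space (LL d)"
    using x by (auto simp: transl_def space_LL)
next
  fix y assume y: "y \<in> transl d (\<lambda>i. - v i) -` A \<inter> space (LL d)"
  have "transl d v (transl d (\<lambda>i. - v i) y) = y" using y
    by (auto simp: transl_def space_LL fun_eq_iff PiE_def extensional_def)
  then show "y \<in> transl d v ` A" using y by (metis IntD1 image_eqI vimageD)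
qed

lemma LL_transl_sets: "A \<in> sets (LL d) \<Longrightarrow> transl d v ` A \<in> sets (LL d)"
  using transl_image_eq[of A d v] sets.sets_into_space[of A "LL d"]
    measurable_sets[OF transl_meas[of d "\<lambda>i. - v i"]] by simp

lemma LL_transl_image: "A \<in> sets (LL d) \<Longrightarrow> emeasure (LL d) (transl d v ` A) = emeasure (LL d) A"
proof -
  assume A: "A \<in> sets (LL d)"
  have "emeasure (LL d) (transl d v ` A) = emeasure (LL d) (transl d (\<lambda>i. - v i) -` A \<inter> space (LL d))"
    using transl_image_eq[of A d v] sets.sets_into_space[OF A] by simp
  also have "\<dots> = emeasure (distr (LL d) (LL d) (transl d (\<lambda>i. - v i))) A"
    using A transl_meas by (subst emeasure_distr) auto
  also have "\<dots> = emeasure (LL d) A" by (simp add: distr_transl)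
  finally show ?thesis .
qed

definition cube :: "nat \<Rightarrow> nat \<Rightarrow> (nat \<Rightarrow> int) \<Rightarrow> (nat \<Rightarrow> real) set" where
  "cube d K z = PiE {..<d} (\<lambda>i. dyI K (z i))"

lemma cube_sets: "PiE {..<d} (\<lambda>i. dyI (k i) (z i)) \<in> sets (LL d)"
  unfolding LL_def by (intro sets_PiM_I_finite) (auto simp: dyI_def)

lemma cube_transl: "cube d K z = transl d (\<lambda>i. real_of_int (z i) / 2^K) ` cube d K (\<lambda>_. 0)"
proof (intro equalityI subsetI)
  fix x assume x: "x \<in> cube d K z"
  define v where "v = (\<lambda>i. real_of_int (z i) / 2^K)"
  define y where "y = restrict (\<lambda>i. x i - v i) {..<d}"
  have "y \<in> cube d K (\<lambda>_. 0)" using x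
    by (auto simp: y_def v_def cube_def dyI_def PiE_def Pi_def diff_divide_distrib add_divide_distrib)
  moreover have "transl d v y = x" using x
    by (auto simp: transl_def y_def cube_def fun_eq_iff PiE_def extensional_def)
  ultimately show "x \<in> transl d (\<lambda>i. real_of_int (z i) / 2^K) ` cube d K (\<lambda>_. 0)"
    unfolding v_def by blast
next
  fix x assume "x \<in> transl d (\<lambda>i. real_of_int (z i) / 2^K) ` cube d K (\<lambda>_. 0)"
  then show "x \<in> cube d K z"
    by (auto simp: transl_def cube_def dyI_def PiE_def Pi_def add_divide_distrib)
qed

lemma box_tile:
  assumes "\<And>i. i < d \<Longrightarrow> k i \<le> K"
  shows "PiE {..<d} (\<lambda>i. dyI (k i) (j i)) =
    (\<Union>t\<in>PiE {..<d} (\<lambda>i. {0..<2^(K - k i)}). cube d K (\<lambda>i. j i * 2^(K - k i) + t i))"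
proof (intro equalityI subsetI)
  fix x assume x: "x \<in> PiE {..<d} (\<lambda>i. dyI (k i) (j i))"
  have "\<forall>i\<in>{..<d}. \<exists>t\<in>{0..<2^(K - k i)}. x i \<in> dyI K (j i * 2^(K - k i) + t)"
  proof
    fix i assume i: "i \<in> {..<d}"
    then have "x i \<in> dyI (k i) (j i)" using x by auto
    then show "\<exists>t\<in>{0..<2^(K - k i)}. x i \<in> dyI K (j i * 2^(K - k i) + t)"
      using dyI_iff_fine[OF assms[of i]] i by auto
  qed
  then obtain t where t: "\<And>i. i \<in> {..<d} \<Longrightarrow> t i \<in> {0..<2^(K - k i)} \<and> x i \<in> dyI K (j i * 2^(K - k i) + t i)"
    by metis
  show "x \<in> (\<Union>t\<in>PiE {..<d} (\<lambda>i. {0..<2^(K - k i)}). cube d K (\<lambda>i. j i * 2^(K - k i) + t i))"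
    using t x by (intro UN_I[of "restrict t {..<d}"]) (auto simp: cube_def PiE_def)
next
  fix x assume "x \<in> (\<Union>t\<in>PiE {..<d} (\<lambda>i. {0..<2^(K - k i)}). cube d K (\<lambda>i. j i * 2^(K - k i) + t i))"
  then obtain t where t: "t \<in> PiE {..<d} (\<lambda>i. {0..<2^(K - k i)})" "x \<in> cube d K (\<lambda>i. j i * 2^(K - k i) + t i)"
    by auto
  have "x i \<in> dyI (k i) (j i)" if i: "i < d" for i
  proof -
    have "x i \<in> dyI K (j i * 2 ^ (K - k i) + t i)"
      using PiE_mem[OF t(2)[unfolded cube_def], of i] i by simp
    moreover have "t i \<in> {0..<2^(K - k i)}"
      using PiE_mem[OF t(1), of i] i by simp
    ultimately show ?thesis using dyI_iff_fine[OF assms[OF i]] by blast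
  qed
  then show "x \<in> PiE {..<d} (\<lambda>i. dyI (k i) (j i))"
    using t by (auto simp: cube_def PiE_def)
qed

lemma box_tile_disj:
  "disjoint_family_on (\<lambda>t. cube d K (\<lambda>i. j i * 2^(K - k i) + t i)) (PiE {..<d} (\<lambda>i. {0..<2^(K - k i)}))"
unfolding disjoint_family_on_def
proof (intro ballI impI)
  fix t t' assume t: "t \<in> PiE {..<d} (\<lambda>i. {0..<2^(K - k i)})" "t' \<in> PiE {..<d} (\<lambda>i. {0..<(2::int)^(K - k i)})" and "t \<noteq> t'"
  then obtain i where i: "i < d" "t i \<noteq> t' i"
    by (metis PiE_ext lessThan_iff)
  show "cube d K (\<lambda>i. j i * 2^(K - k i) + t i) \<inter> cube d K (\<lambda>i. j i * 2^(K - k i) + t' i) = {}"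
    using i dyI_disj[of "j i * 2^(K - k i) + t i" "j i * 2^(K - k i) + t' i" K]
    by (auto simp: cube_def PiE_def Pi_def)
qed

definition tinv :: "nat \<Rightarrow> (nat \<Rightarrow> real) measure \<Rightarrow> bool" where
  "tinv d M \<longleftrightarrow> (\<forall>A\<in>sets (LL d). \<forall>v. emeasure M (transl d v ` A) = emeasure M A)"

lemma box_measure:
  assumes M: "sets M = sets (LL d)" "tinv d M" and k: "\<And>i. i < d \<Longrightarrow> k i \<le> K"
  shows "emeasure M (PiE {..<d} (\<lambda>i. dyI (k i) (j i))) =
     of_nat (\<Prod>i<d. 2^(K - k i)) * emeasure M (cube d K (\<lambda>_. 0))"
proof -
  let ?I = "PiE {..<d} (\<lambda>i. {0..<(2::int)^(K - k i)})"
  let ?F = "\<lambda>t. cube d K (\<lambda>i. j i * 2^(K - k i) + t i)"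
  have fin: "finite ?I" by (intro finite_PiE) auto
  have "emeasure M (PiE {..<d} (\<lambda>i. dyI (k i) (j i))) = emeasure M (\<Union>t\<in>?I. ?F t)"
    using box_tile[OF k] by simp
  also have "\<dots> = (\<Sum>t\<in>?I. emeasure M (?F t))"
    using fin box_tile_disj M(1) cube_sets unfolding cube_def
    by (intro sum_emeasure[symmetric]) auto
  also have "\<dots> = (\<Sum>t\<in>?I. emeasure M (cube d K (\<lambda>_. 0)))"
  proof (intro sum.cong refl)
    fix t
    have "?F t = transl d (\<lambda>i. real_of_int (j i * 2^(K-k i) + t i) / 2^K) ` cube d K (\<lambda>_. 0)" by (rule cube_transl)
    then show "emeasure M (?F t) = emeasure M (cube d K (\<lambda>_. 0))"
      using M(2) cube_sets[where k="\<lambda>_. K" and z="\<lambda>_. 0" and d=d] unfolding tinv_def cube_def by auto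
  qed
  also have "\<dots> = of_nat (card ?I) * emeasure M (cube d K (\<lambda>_. 0))" by simp
  also have "card ?I = (\<Prod>i<d. 2^(K - k i))"
    by (simp add: card_PiE nat_power_eq)
  finally show ?thesis .
qed

definition Qd :: "nat \<Rightarrow> (nat \<Rightarrow> real) set" where "Qd d = cube d 0 (\<lambda>_. 0)"

lemma LL_tinv: "tinv d (LL d)"
  unfolding tinv_def using LL_transl_image by blast

lemma LL_Qd: "emeasure (LL d) (Qd d) = 1"
proof -
  interpret product_sigma_finite "\<lambda>_. lborel :: real measure" by standard
  show ?thesis unfolding LL_def Qd_def cube_def
    by (subst emeasure_PiM) (auto simp: dyI_def)
qed

lemma ennreal_cancel_nat:
  assumes "(0::nat) < n" "of_nat n * (a::ennreal) = of_nat n * b" shows "a = b"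
proof -
  have n: "(of_nat n :: ennreal) \<noteq> 0" "(of_nat n :: ennreal) \<noteq> top" using assms(1) by auto
  have "a = (a * of_nat n) / of_nat n" using n by (simp add: ennreal_mult_divide_eq)
  also have "\<dots> = (b * of_nat n) / of_nat n" using assms(2) by (simp add: mult.commute)
  also have "\<dots> = b" using n by (simp add: ennreal_mult_divide_eq)
  finally show ?thesis .
qed

lemma unique_LL:
  assumes M: "sets M = sets (LL d)" "tinv d M" "emeasure M (Qd d) = 1"
  shows "M = LL d"
proof (rule measure_eqI_generator_eq_countable[OF Gd_Int_stable])
  show "Gd d \<subseteq> Pow (space (LL d))" by (auto simp: Gd_def space_LL PiE_def Pi_def)
  show "sets M = sigma_sets (space (LL d)) (Gd d)" using M(1) sets_LL_Gd by simp
  show "sets (LL d) = sigma_sets (space (LL d)) (Gd d)" using sets_LL_Gd by simp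
  have cM: "emeasure M (cube d K (\<lambda>_. 0)) = emeasure (LL d) (cube d K (\<lambda>_. 0))" for K
  proof -
    have e: "PiE {..<d} (\<lambda>i. dyI ((\<lambda>_. 0) i) ((\<lambda>_. 0) i)) = Qd d" by (simp add: Qd_def cube_def)
    have a0: "emeasure M (PiE {..<d} (\<lambda>i. dyI ((\<lambda>_. 0) i) ((\<lambda>_. 0) i))) = of_nat (\<Prod>i<d. 2^(K - (\<lambda>_. 0) i)) * emeasure M (cube d K (\<lambda>_. 0))"
      by (rule box_measure[OF M(1,2)]) simp
    have b0: "emeasure (LL d) (PiE {..<d} (\<lambda>i. dyI ((\<lambda>_. 0) i) ((\<lambda>_. 0) i))) = of_nat (\<Prod>i<d. 2^(K - (\<lambda>_. 0) i)) * emeasure (LL d) (cube d K (\<lambda>_. 0))"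
      by (rule box_measure[OF refl LL_tinv]) simp
    have a: "emeasure M (Qd d) = of_nat (\<Prod>i<d. 2^(K - 0)) * emeasure M (cube d K (\<lambda>_. 0))"
      using a0 unfolding e by simp
    have b: "emeasure (LL d) (Qd d) = of_nat (\<Prod>i<d. 2^(K - 0)) * emeasure (LL d) (cube d K (\<lambda>_. 0))"
      using b0 unfolding e by simp
    show ?thesis
    proof (rule ennreal_cancel_nat[of "\<Prod>i<d. 2^(K - 0)"])
      show "0 < (\<Prod>i<d. 2^(K - 0)::nat)" by simp
      show "of_nat (\<Prod>i<d. 2^(K - 0)) * emeasure M (cube d K (\<lambda>_. 0)) =
        of_nat (\<Prod>i<d. 2^(K - 0)) * emeasure (LL d) (cube d K (\<lambda>_. 0))"
        using a b M(3) LL_Qd[of d] by simp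
    qed
  qed
  fix X assume "X \<in> Gd d"
  then obtain A where A: "X = PiE {..<d} A" "A \<in> Pi {..<d} (\<lambda>_. Dy)" by (auto simp: Gd_def)
  show "emeasure M X = emeasure (LL d) X"
  proof (cases "\<exists>i<d. A i = {}")
    case True
    then have "X = {}" using A by (auto simp: PiE_eq_empty_iff)
    then show ?thesis by simp
  next
    case False
    then have "\<forall>i\<in>{..<d}. \<exists>kj. A i = dyI (fst kj) (snd kj)" using A by (force simp: Dy_def)
    then obtain kj where kj: "\<And>i. i \<in> {..<d} \<Longrightarrow> A i = dyI (fst (kj i)) (snd (kj i))" by metis
    define k where "k i = fst (kj i)" for i
    define j where "j i = snd (kj i)" for i
    define K where "K = (\<Sum>i<d. k i)"
    have kK: "k i \<le> K" if "i < d" for i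
      unfolding K_def using that by (intro member_le_sum) auto
    have X: "X = PiE {..<d} (\<lambda>i. dyI (k i) (j i))" using A kj by (auto simp: k_def j_def intro!: PiE_cong)
    show ?thesis
      unfolding X using box_measure[OF M(1,2) kK] box_measure[OF refl LL_tinv[of d] kK] cM by simp
  qed
next
  let ?A = "(\<lambda>z. cube d 0 z) ` PiE {..<d} (\<lambda>_. UNIV)"
  show "?A \<subseteq> Gd d" by (auto simp: Gd_def cube_def Dy_def)
  show "countable ?A" by (intro countable_image countable_PiE) auto
  show "\<Union>?A = space (LL d)"
  proof (intro equalityI subsetI)
    fix x assume "x \<in> \<Union>?A" then show "x \<in> space (LL d)" by (auto simp: cube_def space_LL)
  next
    fix x assume x: "x \<in> space (LL d)"
    have 1: "x \<in> cube d 0 (restrict (\<lambda>i. \<lfloor>x i\<rfloor>) {..<d})"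
      using x by (auto simp: cube_def space_LL dyI_iff PiE_def)
    have 2: "restrict (\<lambda>i. \<lfloor>x i\<rfloor>) {..<d} \<in> PiE {..<d} (\<lambda>_. UNIV)" by simp
    have 3: "cube d 0 (restrict (\<lambda>i. \<lfloor>x i\<rfloor>) {..<d}) \<in> ?A" using 2 by (rule imageI)
    show "x \<in> \<Union>?A" using UnionI[OF 3 1] .
  qed
  fix a assume "a \<in> ?A"
  then obtain z where a: "a = cube d 0 z" by auto
  have "emeasure M a = emeasure M (Qd d)"
    using M(2) cube_sets[where k="\<lambda>_. 0" and z="\<lambda>_. 0" and d=d] cube_transl[of d 0 z] unfolding a tinv_def Qd_def cube_def
    by auto
  then show "emeasure M a \<noteq> \<infinity>" using M(3) by simp
qed


definition linmap :: "nat \<Rightarrow> (nat \<Rightarrow> nat \<Rightarrow> real) \<Rightarrow> (nat \<Rightarrow> real) \<Rightarrow> (nat \<Rightarrow> real)" where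
  "linmap d B x = restrict (\<lambda>j. \<Sum>i<d. B j i * x i) {..<d}"

definition Zd :: "nat \<Rightarrow> (nat \<Rightarrow> real) set" where
  "Zd d = PiE {..<d} (\<lambda>_. \<int>)"

lemma linmap_meas: "linmap d B \<in> measurable (LL d) (LL d)"
  unfolding linmap_def LL_def by measurable

lemma linmap_space: "linmap d B x \<in> space (LL d)"
  by (simp add: linmap_def space_LL)

lemma linmap_transl: "linmap d B (transl d v x) = transl d (linmap d B v) (linmap d B x)"
  by (auto simp: linmap_def transl_def fun_eq_iff sum.distrib distrib_left)

lemma linmap_inverse:
  assumes bij: "bij_betw (linmap d B) (space (LL d)) (space (LL d))"
  shows "\<exists>C. (\<forall>y\<in>space (LL d). linmap d B (linmap d C y) = y) \<and>
             (\<forall>x\<in>space (LL d). linmap d C (linmap d B x) = x)"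
proof -
  let ?T = "linmap d B"
  let ?\<Omega> = "space (LL d)"
  define g where "g = the_inv_into ?\<Omega> ?T"
  define e where "e i = restrict (\<lambda>l. if l = i then 1 else (0::real)) {..<d}" for i
  have e: "e i \<in> ?\<Omega>" for i by (simp add: e_def space_LL)
  have ge: "g (e i) \<in> ?\<Omega>" "?T (g (e i)) = e i" for i
    using bij e unfolding g_def
    by (auto simp: bij_betw_def the_inv_into_f_f f_the_inv_into_f the_inv_into_into)
  define C where "C j i = g (e i) j" for j i
  have 1: "?T (linmap d C y) = y" if y: "y \<in> ?\<Omega>" for y
  proof -
    have "?T (linmap d C y) k = y k" for k
    proof (cases "k < d")
      case True
      have "?T (linmap d C y) k = (\<Sum>j<d. B k j * (\<Sum>i<d. C j i * y i))"
        using True by (simp add: linmap_def)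
      also have "\<dots> = (\<Sum>j<d. \<Sum>i<d. B k j * (C j i * y i))"
        by (simp add: sum_distrib_left)
      also have "\<dots> = (\<Sum>i<d. \<Sum>j<d. B k j * (C j i * y i))"
        by (rule sum.swap)
      also have "\<dots> = (\<Sum>i<d. y i * (\<Sum>j<d. B k j * g (e i) j))"
        by (simp add: sum_distrib_left C_def mult.commute mult.left_commute)
      also have "\<dots> = (\<Sum>i<d. y i * e i k)"
      proof (intro sum.cong refl)
        fix i assume "i \<in> {..<d}"
        have "e i k = ?T (g (e i)) k" using ge(2)[of i] by simp
        also have "\<dots> = (\<Sum>j<d. B k j * g (e i) j)" using True by (simp add: linmap_def)
        finally show "y i * (\<Sum>j<d. B k j * g (e i) j) = y i * e i k" by simp
      qed
      also have "\<dots> = (\<Sum>i<d. if i = k then y i else 0)"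
        using True by (intro sum.cong) (auto simp: e_def)
      also have "\<dots> = y k" using True by simp
      finally show ?thesis .
    next
      case False
      then show ?thesis using y by (simp add: linmap_def space_LL PiE_def extensional_def)
    qed
    then show ?thesis by auto
  qed
  have 2: "linmap d C (?T x) = x" if x: "x \<in> ?\<Omega>" for x
  proof -
    have "?T (linmap d C (?T x)) = ?T x" using 1 linmap_space by blast
    then show ?thesis using bij x linmap_space[of d C] by (auto simp: bij_betw_def inj_on_def)
  qed
  show ?thesis using 1 2 by blast
qed


definition neg :: "nat \<Rightarrow> (nat \<Rightarrow> real) \<Rightarrow> (nat \<Rightarrow> real)" where
  "neg d w = restrict (\<lambda>i. - w i) {..<d}"

lemma Zd_space: "Zd d \<subseteq> space (LL d)"
  by (auto simp: Zd_def space_LL)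

lemma neg_Zd: "w \<in> Zd d \<Longrightarrow> neg d w \<in> Zd d"
  unfolding Zd_def neg_def by (simp add: PiE_iff Ints_minus)

lemma neg_neg: "w \<in> space (LL d) \<Longrightarrow> neg d (neg d w) = w"
  by (auto simp: neg_def space_LL fun_eq_iff PiE_def extensional_def)

lemma neg_space: "neg d w \<in> space (LL d)"
  by (simp add: neg_def space_LL)

lemma transl_space: "transl d v x \<in> space (LL d)"
  by (simp add: transl_def space_LL)

lemma transl_neg_cancel: "x \<in> space (LL d) \<Longrightarrow> transl d (neg d w) (transl d w x) = x"
  by (auto simp: transl_def neg_def space_LL fun_eq_iff PiE_def extensional_def)

lemma transl_inj: "inj_on (transl d v) (space (LL d))"
  by (metis inj_on_inverseI transl_neg_cancel[of _ d v])

lemma countable_Zd: "countable (Zd d)"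
  unfolding Zd_def by (intro countable_PiE) (auto simp: Ints_def)

lemma Qr_cube:
  assumes "w \<in> Zd d"
  shows "transl d w ` Qd d = cube d 0 (\<lambda>i. \<lfloor>w i\<rfloor>)"
proof -
  have "transl d w = transl d (\<lambda>i. real_of_int \<lfloor>w i\<rfloor> / 2^0)"
    using assms by (auto simp: transl_def Zd_def fun_eq_iff PiE_def Pi_def)
  then show ?thesis using cube_transl[of d 0 "\<lambda>i. \<lfloor>w i\<rfloor>"] by (simp add: Qd_def)
qed

lemma cube0_iff: "x \<in> cube d 0 z \<longleftrightarrow> x \<in> space (LL d) \<and> (\<forall>i<d. \<lfloor>x i\<rfloor> = z i)"
  by (auto simp: cube_def space_LL dyI_iff PiE_def)

lemma Qr_disj: "disjoint_family_on (\<lambda>w. transl d w ` Qd d) (Zd d)"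
  unfolding disjoint_family_on_def
proof (intro ballI impI)
  fix w w' assume w: "w \<in> Zd d" "w' \<in> Zd d" and "w \<noteq> w'"
  then obtain i where i: "i < d" "w i \<noteq> w' i"
    by (auto simp: Zd_def PiE_def extensional_def fun_eq_iff) (metis not_less)
  then have "\<lfloor>w i\<rfloor> \<noteq> \<lfloor>w' i\<rfloor>" using w
    by (auto simp: Zd_def PiE_def Pi_def elim!: Ints_cases)
  then show "transl d w ` Qd d \<inter> transl d w' ` Qd d = {}"
    using i unfolding Qr_cube[OF w(1)] Qr_cube[OF w(2)] by (auto simp: cube0_iff)
qed

lemma Qr_cover: "(\<Union>w\<in>Zd d. transl d w ` Qd d) = space (LL d)"
proof (intro equalityI subsetI)
  fix x assume "x \<in> (\<Union>w\<in>Zd d. transl d w ` Qd d)"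
  then show "x \<in> space (LL d)" using transl_space by auto
next
  fix x assume x: "x \<in> space (LL d)"
  define w where "w = restrict (\<lambda>i. real_of_int \<lfloor>x i\<rfloor>) {..<d}"
  have w: "w \<in> Zd d" by (simp add: w_def Zd_def)
  have "x \<in> transl d w ` Qd d" unfolding Qr_cube[OF w] using x by (simp add: cube0_iff w_def)
  then show "x \<in> (\<Union>w\<in>Zd d. transl d w ` Qd d)" using w by blast
qed

lemma Qd_sets: "Qd d \<in> sets (LL d)"
  using cube_sets[where k="\<lambda>_. 0" and z="\<lambda>_. 0" and d=d] by (simp add: Qd_def cube_def)

lemma Qd_space: "Qd d \<subseteq> space (LL d)"
  using Qd_sets sets.sets_into_space by blast

lemma tiling:
  assumes C1: "\<forall>y\<in>space (LL d). linmap d B (linmap d C y) = y"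
    and C2: "\<forall>x\<in>space (LL d). linmap d C (linmap d B x) = x"
    and lat: "linmap d B ` Zd d = Zd d"
    and img: "\<And>X. X \<in> sets (LL d) \<Longrightarrow> linmap d B ` X \<in> sets (LL d)"
  shows "emeasure (LL d) (linmap d B ` Qd d) = 1"
proof -
  let ?T = "linmap d B"
  let ?S = "linmap d C"
  let ?\<Omega> = "space (LL d)"
  let ?Q = "Qd d"
  let ?R = "\<lambda>w. transl d w ` ?Q"
  define \<sigma> where "\<sigma> w = ?S (neg d w)" for w
  have Rsets: "?R w \<in> sets (LL d)" for w using LL_transl_sets Qd_sets by blast
  have Rsp: "?R w \<subseteq> ?\<Omega>" for w using transl_space by auto
  have Tsp: "?T ` X \<subseteq> ?\<Omega>" for X using linmap_space by auto
  have Tinj: "inj_on ?T ?\<Omega>" by (metis C2 inj_on_inverseI)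
  have latS: "?S ` Zd d \<subseteq> Zd d"
  proof
    fix y assume "y \<in> ?S ` Zd d"
    then obtain z where z: "z \<in> Zd d" "y = ?S z" by auto
    then obtain x where x: "x \<in> Zd d" "z = ?T x" using lat by auto
    then show "y \<in> Zd d" using z C2 Zd_space[of d] by (metis subsetD)
  qed
  have \<sigma>Z: "\<sigma> w \<in> Zd d" if "w \<in> Zd d" for w
    using latS neg_Zd[OF that] unfolding \<sigma>_def by auto
  have \<sigma>bij: "bij_betw \<sigma> (Zd d) (Zd d)"
  proof (rule bij_betw_byWitness[where f'="\<lambda>u. neg d (?T u)"])
    show "\<forall>a\<in>Zd d. neg d (?T (\<sigma> a)) = a"
      using C1 neg_space neg_neg Zd_space unfolding \<sigma>_def by (metis subsetD)
    show "\<forall>a'\<in>Zd d. \<sigma> (neg d (?T a')) = a'"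
      using C2 linmap_space neg_neg Zd_space unfolding \<sigma>_def by (metis subsetD)
    show "\<sigma> ` Zd d \<subseteq> Zd d" using \<sigma>Z by auto
    show "(\<lambda>u. neg d (?T u)) ` Zd d \<subseteq> Zd d" using lat neg_Zd by auto
  qed
  have per: "emeasure (LL d) (?T ` ?Q \<inter> ?R w) = emeasure (LL d) (?T ` ?R (\<sigma> w) \<inter> ?Q)"
    if w: "w \<in> Zd d" for w
  proof -
    have ms: "?T ` ?Q \<inter> ?R w \<in> sets (LL d)" using img[OF Qd_sets] Rsets by blast
    have "emeasure (LL d) (?T ` ?Q \<inter> ?R w) = emeasure (LL d) (transl d (neg d w) ` (?T ` ?Q \<inter> ?R w))"
      using LL_transl_image[OF ms] by simp
    also have "transl d (neg d w) ` (?T ` ?Q \<inter> ?R w) = transl d (neg d w) ` ?T ` ?Q \<inter> transl d (neg d w) ` ?R w"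
      by (rule inj_on_image_Int[OF transl_inj Tsp Rsp])
    also have "transl d (neg d w) ` ?R w = ?Q"
    proof -
      have "transl d (neg d w) (transl d w x) = x" if "x \<in> ?Q" for x
        using transl_neg_cancel Qd_space that by blast
      then show ?thesis by (simp add: image_image)
    qed
    also have "transl d (neg d w) ` ?T ` ?Q = ?T ` ?R (\<sigma> w)"
    proof -
      have "?T (\<sigma> w) = neg d w" using C1 neg_space unfolding \<sigma>_def by blast
      then have "transl d (neg d w) (?T x) = ?T (transl d (\<sigma> w) x)" for x
        by (simp add: linmap_transl)
      then show ?thesis by (simp add: image_image)
    qed
    finally show ?thesis .
  qed
  have "?T ` ?Q = ?T ` ?Q \<inter> (\<Union>w\<in>Zd d. ?R w)" using Qr_cover[of d] Tsp[of ?Q] by (simp add: Int_absorb2)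
  also have "\<dots> = (\<Union>w\<in>Zd d. ?T ` ?Q \<inter> ?R w)" by (rule Int_UN_distrib)
  finally have "emeasure (LL d) (?T ` ?Q) = emeasure (LL d) (\<Union>w\<in>Zd d. ?T ` ?Q \<inter> ?R w)" by simp
  also have "\<dots> = (\<integral>\<^sup>+w. emeasure (LL d) (?T ` ?Q \<inter> ?R w) \<partial>count_space (Zd d))"
  proof (rule emeasure_UN_countable)
    show "\<And>i. i \<in> Zd d \<Longrightarrow> ?T ` ?Q \<inter> ?R i \<in> sets (LL d)" using img[OF Qd_sets] Rsets by blast
    show "countable (Zd d)" by (rule countable_Zd)
    show "disjoint_family_on (\<lambda>w. ?T ` ?Q \<inter> ?R w) (Zd d)"
      using Qr_disj[of d] unfolding disjoint_family_on_def by blast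
  qed
  also have "\<dots> = (\<integral>\<^sup>+w. emeasure (LL d) (?T ` ?R (\<sigma> w) \<inter> ?Q) \<partial>count_space (Zd d))"
    by (intro nn_integral_cong) (simp add: per)
  also have "\<dots> = (\<integral>\<^sup>+u. emeasure (LL d) (?T ` ?R u \<inter> ?Q) \<partial>count_space (Zd d))"
    by (rule nn_integral_bij_count_space[OF \<sigma>bij, where f="\<lambda>u. emeasure (LL d) (?T ` ?R u \<inter> ?Q)"])
  also have "\<dots> = emeasure (LL d) (\<Union>u\<in>Zd d. ?T ` ?R u \<inter> ?Q)"
  proof (rule emeasure_UN_countable[symmetric])
    show "\<And>i. i \<in> Zd d \<Longrightarrow> ?T ` ?R i \<inter> ?Q \<in> sets (LL d)" using img[OF Rsets] Qd_sets by blast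
    show "countable (Zd d)" by (rule countable_Zd)
    show "disjoint_family_on (\<lambda>u. ?T ` ?R u \<inter> ?Q) (Zd d)"
      using Qr_disj[of d] Tinj Rsp unfolding disjoint_family_on_def inj_on_def by blast
  qed
  also have "(\<Union>u\<in>Zd d. ?T ` ?R u \<inter> ?Q) = ?Q"
  proof -
    have "(\<Union>u\<in>Zd d. ?T ` ?R u) = ?T ` (\<Union>u\<in>Zd d. ?R u)" by (rule image_UN[symmetric])
    also have "\<dots> = ?T ` ?\<Omega>" using Qr_cover[of d] by simp
    also have "\<dots> = ?\<Omega>"
    proof
      show "?T ` ?\<Omega> \<subseteq> ?\<Omega>" by (rule Tsp)
      show "?\<Omega> \<subseteq> ?T ` ?\<Omega>"
      proof
        fix y assume "y \<in> ?\<Omega>"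
        then have "y = ?T (?S y)" using C1 by simp
        then show "y \<in> ?T ` ?\<Omega>" using linmap_space by blast
      qed
    qed
    finally have e: "(\<Union>u\<in>Zd d. ?T ` ?R u) = ?\<Omega>" .
    have "(\<Union>u\<in>Zd d. ?T ` ?R u \<inter> ?Q) = (\<Union>u\<in>Zd d. ?T ` ?R u) \<inter> ?Q" by (rule UN_extend_simps(4)[symmetric])
    then show ?thesis using e Qd_space[of d] by (simp add: Int_absorb1)
  qed
  also have "emeasure (LL d) ?Q = 1" by (rule LL_Qd)
  finally show ?thesis .
qed

lemma unimod:
  assumes bij: "bij_betw (linmap d B) (space (LL d)) (space (LL d))"
    and lat: "linmap d B ` Zd d = Zd d"
    and A: "A \<in> sets (LL d)"
  shows "linmap d B ` A \<in> sets (LL d)" "emeasure (LL d) (linmap d B ` A) = emeasure (LL d) A"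
proof -
  let ?T = "linmap d B"
  let ?\<Omega> = "space (LL d)"
  obtain C where C1: "\<forall>y\<in>?\<Omega>. ?T (linmap d C y) = y" and C2: "\<forall>x\<in>?\<Omega>. linmap d C (?T x) = x"
    using linmap_inverse[OF bij] by blast
  let ?S = "linmap d C"
  have imgeq: "?T ` X = ?S -` X \<inter> ?\<Omega>" if "X \<subseteq> ?\<Omega>" for X
  proof (intro equalityI subsetI)
    fix y assume "y \<in> ?T ` X"
    then show "y \<in> ?S -` X \<inter> ?\<Omega>" using C2 that linmap_space by auto
  next
    fix y assume "y \<in> ?S -` X \<inter> ?\<Omega>"
    then show "y \<in> ?T ` X" using C1 by (metis IntD1 IntD2 image_eqI vimageD)
  qed
  have img: "?T ` X \<in> sets (LL d)" if "X \<in> sets (LL d)" for X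
    using imgeq[OF sets.sets_into_space[OF that]] measurable_sets[OF linmap_meas[of d C] that] by simp
  show "?T ` A \<in> sets (LL d)" by (rule img[OF A])
  define N where "N = distr (LL d) (LL d) ?S"
  have sN: "sets N = sets (LL d)" by (simp add: N_def)
  have eN: "emeasure N X = emeasure (LL d) (?T ` X)" if "X \<in> sets (LL d)" for X
    unfolding N_def using that imgeq[OF sets.sets_into_space[OF that]] linmap_meas
    by (subst emeasure_distr) auto
  have tN: "tinv d N" unfolding tinv_def
  proof (intro ballI allI)
    fix X v assume X: "X \<in> sets (LL d)"
    have "?T ` transl d v ` X = transl d (?T v) ` ?T ` X"
      by (simp add: image_image linmap_transl)
    then show "emeasure N (transl d v ` X) = emeasure N X"
      using eN[OF X] eN[OF LL_transl_sets[OF X]] LL_transl_image[OF img[OF X]] by simp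
  qed
  have qN: "emeasure N (Qd d) = 1"
    using eN[OF Qd_sets] tiling[OF C1 C2 lat img] by simp
  have "N = LL d" by (rule unique_LL[OF sN tN qN])
  then show "emeasure (LL d) (?T ` A) = emeasure (LL d) A" using eN[OF A] by simp
qed


definition Ep :: "nat \<Rightarrow> (nat \<Rightarrow> nat) \<Rightarrow> (nat \<times> nat) set" where
  "Ep n m = {(i, j). i \<in> {1..n} \<and> j \<in> {2..m i}}"

lemma Gm_Sigma: "Gm_edges n m = Sigma {1..n} (\<lambda>i. {1..m i})"
  by (auto simp: Gm_edges_def)

lemma Ep_Sigma: "Ep n m = Sigma {1..n} (\<lambda>i. {2..m i})"
  by (auto simp: Ep_def)

lemma finite_Gm: "finite (Gm_edges n m)" by (simp add: Gm_Sigma)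
lemma finite_Ep: "finite (Ep n m)" by (simp add: Ep_Sigma)
lemma Ep_sub: "Ep n m \<subseteq> Gm_edges n m" by (auto simp: Ep_def Gm_edges_def)

lemma card_Gm: "card (Gm_edges n m) = (\<Sum>i=1..n. m i)"
  by (simp add: Gm_Sigma card_SigmaI)

lemma card_Ep: "card (Ep n m) = (\<Sum>i=1..n. m i - 1)"
  by (simp add: Ep_Sigma card_SigmaI)

lemma card_Gm_minus:
  assumes "\<forall>i\<in>{1..n}. 0 < m i"
  shows "card (Gm_edges n m) - n = card (Ep n m)"
proof -
  have "(\<Sum>i=1..n. m i) = (\<Sum>i=1..n. (m i - 1) + 1)"
    using assms by (intro sum.cong) auto
  also have "\<dots> = (\<Sum>i=1..n. m i - 1) + (\<Sum>i=1..n. 1)" by (rule sum.distrib)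
  also have "\<dots> = (\<Sum>i=1..n. m i - 1) + n" by simp
  finally show ?thesis by (simp add: card_Gm card_Ep)
qed

lemma netflow_Gm:
  assumes "k \<in> {1..n}"
  shows "netflow (Gm_edges n m) Gm_tail (Gm_head n) f k = (\<Sum>j\<in>{1..m k}. f (k, j))"
proof -
  have 1: "{e \<in> Gm_edges n m. Gm_tail e = k} = (\<lambda>j. (k, j)) ` {1..m k}"
    using assms by (auto simp: Gm_edges_def Gm_tail_def)
  have 2: "{e \<in> Gm_edges n m. Gm_head n e = k} = {}"
    using assms by (auto simp: Gm_head_def)
  show ?thesis unfolding netflow_def 1 2
    by (simp add: sum.reindex inj_on_def)
qed


locale gm =
  fixes n :: nat and m :: "nat \<Rightarrow> nat" and h :: "nat \<Rightarrow> nat \<times> nat"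
  assumes mpos: "\<forall>i\<in>{1..n}. 0 < m i"
    and hbij: "bij_betw h {..<card (Ep n m)} (Ep n m)"
begin

abbreviation "d \<equiv> card (Ep n m)"
abbreviation "E \<equiv> Gm_edges n m"
abbreviation "V \<equiv> flow_dir (Gm_edges n m) Gm_tail (Gm_head n) n"

definition psi :: "(nat \<times> nat \<Rightarrow> real) \<Rightarrow> (nat \<Rightarrow> real)" where
  "psi f = restrict (\<lambda>l. f (h l)) {..<d}"
definition Phi :: "nat \<times> nat \<Rightarrow> nat \<times> nat \<Rightarrow> real" where
  "Phi e e' = (if 2 \<le> snd e then (if e' = e then 1 else 0) else (if fst e' = fst e then -1 else 0))"
definition phi :: "(nat \<Rightarrow> real) \<Rightarrow> (nat \<times> nat \<Rightarrow> real)" where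
  "phi y = restrict (\<lambda>e. \<Sum>l<d. Phi e (h l) * y l) E"
definition blk :: "nat \<Rightarrow> nat set" where
  "blk i = {l\<in>{..<d}. fst (h l) = i}"

lemma h_in: "l < d \<Longrightarrow> h l \<in> Ep n m"
  using hbij by (auto simp: bij_betw_def)

lemma h_inj: "inj_on h {..<d}"
  using hbij by (auto simp: bij_betw_def)

lemma h_E: "l < d \<Longrightarrow> h l \<in> E"
  using h_in Ep_sub by blast

lemma h_snd: "l < d \<Longrightarrow> 2 \<le> snd (h l)"
  using h_in[of l] by (auto simp: Ep_def)

lemma Ep_iff: "(i, j) \<in> Ep n m \<longleftrightarrow> i \<in> {1..n} \<and> 2 \<le> j \<and> j \<le> m i"
  by (auto simp: Ep_def)

lemma E_iff: "(i, j) \<in> E \<longleftrightarrow> i \<in> {1..n} \<and> 1 \<le> j \<and> j \<le> m i"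
  by (auto simp: Gm_edges_def)

lemma sum_h: "(\<Sum>l<d. G (h l)) = (\<Sum>e\<in>Ep n m. G e)"
  using sum.reindex_bij_betw[OF hbij, of G] by simp

lemma blk_sum:
  assumes i: "i \<in> {1..n}"
  shows "(\<Sum>l\<in>blk i. g (h l)) = (\<Sum>j\<in>{2..m i}. g (i, j))"
proof -
  have "(\<Sum>l\<in>blk i. g (h l)) = (\<Sum>l<d. if fst (h l) = i then g (h l) else 0)"
    unfolding blk_def by (rule sum.inter_filter) simp
  also have "\<dots> = (\<Sum>e\<in>Ep n m. if fst e = i then g e else 0)"
    by (rule sum_h)
  also have "\<dots> = (\<Sum>e\<in>{e\<in>Ep n m. fst e = i}. g e)"
    by (rule sum.inter_filter[symmetric]) (rule finite_Ep)
  also have "{e\<in>Ep n m. fst e = i} = (\<lambda>j. (i, j)) ` {2..m i}"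
    using i by (auto simp: Ep_def)
  also have "(\<Sum>e\<in>(\<lambda>j. (i, j)) ` {2..m i}. g e) = (\<Sum>j\<in>{2..m i}. g (i, j))"
    by (simp add: sum.reindex inj_on_def)
  finally show ?thesis .
qed

lemma phi_at_h:
  assumes l: "l < d"
  shows "phi y (h l) = y l"
proof -
  have "phi y (h l) = (\<Sum>l'<d. Phi (h l) (h l') * y l')"
    using h_E[OF l] by (simp add: phi_def)
  also have "\<dots> = (\<Sum>l'<d. if l' = l then y l' else 0)"
  proof (intro sum.cong refl)
    fix l' assume "l' \<in> {..<d}"
    then have "h l' = h l \<longleftrightarrow> l' = l" using h_inj l by (auto simp: inj_on_def)
    then show "Phi (h l) (h l') * y l' = (if l' = l then y l' else 0)"
      using h_snd[OF l] by (simp add: Phi_def)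
  qed
  also have "\<dots> = y l" using l by simp
  finally show ?thesis .
qed

lemma phi_at_1:
  assumes e: "e \<in> E" "snd e < 2"
  shows "phi y e = - (\<Sum>l\<in>blk (fst e). y l)"
proof -
  have "phi y e = (\<Sum>l<d. Phi e (h l) * y l)" using e by (simp add: phi_def)
  also have "\<dots> = (\<Sum>l<d. if fst (h l) = fst e then - y l else 0)"
    using e by (intro sum.cong refl) (simp add: Phi_def)
  also have "\<dots> = (\<Sum>l\<in>blk (fst e). - y l)"
    unfolding blk_def by (rule sum.inter_filter[symmetric]) simp
  finally show ?thesis by (simp add: sum_negf)
qed

lemma psi_phi: "y \<in> space (LL d) \<Longrightarrow> psi (phi y) = y"
  by (auto simp: psi_def phi_at_h space_LL fun_eq_iff PiE_def extensional_def)

lemma psi_space: "psi f \<in> space (LL d)"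
  by (simp add: psi_def space_LL)

lemma mpos': "i \<in> {1..n} \<Longrightarrow> 1 \<le> m i"
  using mpos by (metis One_nat_def Suc_leI)

lemma set_1m: "i \<in> {1..n} \<Longrightarrow> {1..m i} = insert 1 {2..m i}"
  using mpos'[of i] by auto

lemma phi_netflow:
  assumes k: "k \<in> {1..n}"
  shows "(\<Sum>j\<in>{1..m k}. phi y (k, j)) = 0"
proof -
  have "(\<Sum>j\<in>{1..m k}. phi y (k, j)) = phi y (k, 1) + (\<Sum>j\<in>{2..m k}. phi y (k, j))"
    using set_1m[OF k] by simp
  also have "phi y (k, 1) = - (\<Sum>l\<in>blk k. y l)"
    using k mpos'[OF k] by (subst phi_at_1) (auto simp: E_iff)
  also have "(\<Sum>j\<in>{2..m k}. phi y (k, j)) = (\<Sum>l\<in>blk k. phi y (h l))"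
    using blk_sum[OF k, of "phi y"] by simp
  also have "\<dots> = (\<Sum>l\<in>blk k. y l)"
    by (intro sum.cong refl) (auto simp: blk_def phi_at_h)
  finally show ?thesis by simp
qed

lemma phi_V: "phi y \<in> V"
  unfolding flow_dir_def using phi_netflow netflow_Gm by (simp add: phi_def)

lemma recon:
  assumes f: "f \<in> extensional E" and nf: "\<And>k. k \<in> {1..n} \<Longrightarrow> (\<Sum>j\<in>{1..m k}. f (k, j)) = c k"
    and e: "e \<in> E"
  shows "f e = phi (psi f) e + (if snd e = 1 then c (fst e) else 0)"
proof (cases "2 \<le> snd e")
  case True
  then have "e \<in> Ep n m" using e by (cases e) (auto simp: E_iff Ep_iff)
  then obtain l where l: "l < d" "h l = e" using hbij by (metis bij_betw_def imageE lessThan_iff)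
  then show ?thesis using True phi_at_h[OF l(1), of "psi f"] by (auto simp: psi_def)
next
  case False
  obtain i j where ij: "e = (i, j)" by (cases e)
  then have i: "i \<in> {1..n}" and j: "j = 1" using e False by (auto simp: E_iff)
  have "phi (psi f) e = - (\<Sum>l\<in>blk i. psi f l)" using phi_at_1[OF e] False ij by simp
  also have "(\<Sum>l\<in>blk i. psi f l) = (\<Sum>l\<in>blk i. f (h l))"
    by (intro sum.cong refl) (auto simp: blk_def psi_def)
  also have "\<dots> = (\<Sum>j\<in>{2..m i}. f (i, j))" by (rule blk_sum[OF i])
  also have "\<dots> = c i - f (i, 1)" using nf[OF i] set_1m[OF i] by simp
  finally show ?thesis using ij j by simp
qed

lemma phi_psi: "f \<in> V \<Longrightarrow> phi (psi f) = f"
proof -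
  assume f: "f \<in> V"
  have ext: "f \<in> extensional E" using f by (simp add: flow_dir_def)
  have nf: "\<And>k. k \<in> {1..n} \<Longrightarrow> (\<Sum>j\<in>{1..m k}. f (k, j)) = 0"
    using f netflow_Gm by (simp add: flow_dir_def)
  show ?thesis
  proof
    fix e show "phi (psi f) e = f e"
    proof (cases "e \<in> E")
      case True then show ?thesis using recon[OF ext nf True] by simp
    next
      case False
      have "f e = undefined" by (rule extensional_arb[OF ext False])
      moreover have "phi (psi f) e = undefined" using False by (simp add: phi_def)
      ultimately show ?thesis by simp
    qed
  qed
qed

lemma phi_bij: "bij_betw phi (space (LL d)) V"
proof (rule bij_betw_byWitness[where f'=psi])
  show "\<forall>a\<in>space (LL d). psi (phi a) = a" using psi_phi by blast
  show "\<forall>a'\<in>V. phi (psi a') = a'" using phi_psi by blast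
  show "phi ` space (LL d) \<subseteq> V" using phi_V by auto
  show "psi ` V \<subseteq> space (LL d)" using psi_space by auto
qed

lemma phi_int: "y \<in> Zd d \<Longrightarrow> e \<in> E \<Longrightarrow> phi y e \<in> \<int>"
  unfolding phi_def Zd_def
  by (auto intro!: Ints_sum Ints_mult simp: Phi_def PiE_iff)

lemma phi_Zd: "phi ` Zd d = {f\<in>V. \<forall>e\<in>E. f e \<in> \<int>}"
proof (intro equalityI subsetI)
  fix f assume "f \<in> phi ` Zd d"
  then show "f \<in> {f\<in>V. \<forall>e\<in>E. f e \<in> \<int>}" using phi_V phi_int by auto
next
  fix f assume f: "f \<in> {f\<in>V. \<forall>e\<in>E. f e \<in> \<int>}"
  have "psi f \<in> Zd d" using f h_E by (auto simp: psi_def Zd_def)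
  moreover have "phi (psi f) = f" using f phi_psi by auto
  ultimately show "f \<in> phi ` Zd d" by (metis image_eqI)
qed

definition M0 :: "nat \<Rightarrow> nat \<times> nat \<Rightarrow> real" where
  "M0 l e = (if e = h l then 1 else 0)"

lemma mat_map_M0: "mat_map d M0 E f = psi f"
proof -
  have "(\<Sum>e\<in>E. M0 l e * f e) = f (h l)" if "l < d" for l
  proof -
    have "(\<Sum>e\<in>E. M0 l e * f e) = (\<Sum>e\<in>E. if h l = e then f e else 0)"
      by (intro sum.cong refl) (auto simp: M0_def)
    also have "\<dots> = f (h l)" using h_E[OF that] finite_Gm by (simp add: sum.delta)
    finally show ?thesis .
  qed
  then show ?thesis by (auto simp: mat_map_def psi_def)
qed

lemma chart_M0: "lattice_chart d M0 E V"
  unfolding lattice_chart_def mat_map_M0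
proof
  show "bij_betw psi V (PiE {..<d} (\<lambda>_. UNIV))"
  proof (rule bij_betw_byWitness[where f'=phi])
    show "\<forall>a\<in>V. phi (psi a) = a" using phi_psi by blast
    show "\<forall>a'\<in>PiE {..<d} (\<lambda>_. UNIV). psi (phi a') = a'" using psi_phi by (simp add: space_LL)
    show "psi ` V \<subseteq> PiE {..<d} (\<lambda>_. UNIV)" using psi_space by (auto simp: space_LL)
    show "phi ` PiE {..<d} (\<lambda>_. UNIV) \<subseteq> V" using phi_V by auto
  qed
  show "psi ` {f \<in> V. \<forall>e\<in>E. f e \<in> \<int>} = PiE {..<d} (\<lambda>_. \<int>)"
  proof -
    have "(\<lambda>y. psi (phi y)) ` Zd d = (\<lambda>y. y) ` Zd d"
      by (rule image_cong[OF refl]) (use psi_phi Zd_space in blast)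
    then show ?thesis unfolding phi_Zd[symmetric] image_image Zd_def by simp
  qed
qed

end


lemma PiM_prod_set:
  fixes I J :: "'i set"
  assumes IJ: "I \<inter> J = {}" and fin: "finite I" "finite J"
    and A: "A \<in> sets (PiM I (\<lambda>_. lborel :: real measure))"
    and B: "B \<in> sets (PiM J (\<lambda>_. lborel :: real measure))"
  shows "emeasure (PiM (I \<union> J) (\<lambda>_. lborel))
      {x \<in> space (PiM (I \<union> J) (\<lambda>_. lborel)). restrict x I \<in> A \<and> restrict x J \<in> B}
    = emeasure (PiM I (\<lambda>_. lborel)) A * emeasure (PiM J (\<lambda>_. lborel)) B"
proof -
  interpret product_sigma_finite "\<lambda>_. lborel :: real measure" by standard
  interpret I: finite_product_sigma_finite "\<lambda>_. lborel :: real measure" I by standard fact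
  interpret J: finite_product_sigma_finite "\<lambda>_. lborel :: real measure" J by standard fact
  interpret P: pair_sigma_finite "PiM I (\<lambda>_. lborel :: real measure)" "PiM J (\<lambda>_. lborel :: real measure)" ..
  let ?X = "{x \<in> space (PiM (I \<union> J) (\<lambda>_. lborel)). restrict x I \<in> A \<and> restrict x J \<in> B}"
  have Xs: "?X \<in> sets (PiM (I \<union> J) (\<lambda>_. lborel))"
  proof -
    have "?X = (\<lambda>x. restrict x I) -` A \<inter> space (PiM (I \<union> J) (\<lambda>_. lborel)) \<inter>
               ((\<lambda>x. restrict x J) -` B \<inter> space (PiM (I \<union> J) (\<lambda>_. lborel)))" by auto
    also have "\<dots> \<in> sets (PiM (I \<union> J) (\<lambda>_. lborel))"
      using measurable_sets[OF measurable_restrict_subset[of I "I \<union> J"] A]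
            measurable_sets[OF measurable_restrict_subset[of J "I \<union> J"] B] by auto
    finally show ?thesis .
  qed
  have "emeasure (PiM (I \<union> J) (\<lambda>_. lborel)) ?X =
     emeasure (distr (PiM I (\<lambda>_. lborel) \<Otimes>\<^sub>M PiM J (\<lambda>_. lborel)) (PiM (I \<union> J) (\<lambda>_. lborel)) (merge I J)) ?X"
    using distr_merge[OF IJ fin] by simp
  also have "\<dots> = emeasure (PiM I (\<lambda>_. lborel) \<Otimes>\<^sub>M PiM J (\<lambda>_. lborel))
        (merge I J -` ?X \<inter> space (PiM I (\<lambda>_. lborel) \<Otimes>\<^sub>M PiM J (\<lambda>_. lborel)))"
    using Xs by (subst emeasure_distr) auto
  also have "merge I J -` ?X \<inter> space (PiM I (\<lambda>_. lborel) \<Otimes>\<^sub>M PiM J (\<lambda>_. lborel)) = A \<times> B"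
  proof (intro equalityI subsetI)
    fix z assume z: "z \<in> merge I J -` ?X \<inter> space (PiM I (\<lambda>_. lborel) \<Otimes>\<^sub>M PiM J (\<lambda>_. lborel))"
    obtain x y where xy: "z = (x, y)" by (cases z)
    have x: "x \<in> PiE I (\<lambda>_. UNIV)" and y: "y \<in> PiE J (\<lambda>_. UNIV)"
      using z xy by (auto simp: space_pair_measure space_PiM)
    have "restrict (merge I J (x, y)) I = x" "restrict (merge I J (x, y)) J = y"
      using x y IJ by (auto simp: merge_def fun_eq_iff PiE_def extensional_def)
    then show "z \<in> A \<times> B" using z xy by auto
  next
    fix z assume z: "z \<in> A \<times> B"
    obtain x y where xy: "z = (x, y)" by (cases z)
    have x: "x \<in> PiE I (\<lambda>_. UNIV)" and y: "y \<in> PiE J (\<lambda>_. UNIV)"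
      using z xy sets.sets_into_space[OF A] sets.sets_into_space[OF B] by (auto simp: space_PiM)
    have "restrict (merge I J (x, y)) I = x" "restrict (merge I J (x, y)) J = y"
      using x y IJ by (auto simp: merge_def fun_eq_iff PiE_def extensional_def)
    moreover have "merge I J (x, y) \<in> space (PiM (I \<union> J) (\<lambda>_. lborel))"
      using x y by (auto simp: space_PiM merge_def PiE_def extensional_def)
    ultimately show "z \<in> merge I J -` ?X \<inter> space (PiM I (\<lambda>_. lborel) \<Otimes>\<^sub>M PiM J (\<lambda>_. lborel))"
      using z xy x y by (auto simp: space_pair_measure space_PiM)
  qed
  also have "emeasure (PiM I (\<lambda>_. lborel) \<Otimes>\<^sub>M PiM J (\<lambda>_. lborel)) (A \<times> B) =
      emeasure (PiM I (\<lambda>_. lborel)) A * emeasure (PiM J (\<lambda>_. lborel)) B"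
    using A B by (rule J.emeasure_pair_measure_Times)
  finally show ?thesis .
qed


lemma sum_comp_meas:
  "S \<subseteq> I \<Longrightarrow> (\<lambda>y. \<Sum>l\<in>S. y l) \<in> borel_measurable (PiM I (\<lambda>_. lborel :: real measure))"
  by (intro borel_measurable_sum measurable_component_singleton) auto

context gm
begin

definition Dk :: "nat \<Rightarrow> nat set" where
  "Dk k = {l \<in> {..<d}. fst (h l) \<le> k}"

definition Sk :: "(nat \<Rightarrow> nat) \<Rightarrow> nat \<Rightarrow> (nat \<Rightarrow> real) set" where
  "Sk a k = {y \<in> PiE (Dk k) (\<lambda>_. UNIV). (\<forall>l\<in>Dk k. 0 \<le> y l) \<and> (\<forall>i\<in>{1..k}. (\<Sum>l\<in>blk i. y l) \<le> real (a i))}"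

lemma fst_h: "l < d \<Longrightarrow> fst (h l) \<in> {1..n}"
  using h_in[of l] by (auto simp: Ep_def)

lemma blk_sub: "i \<le> k \<Longrightarrow> blk i \<subseteq> Dk k"
  by (auto simp: blk_def Dk_def)

lemma Dk_0: "Dk 0 = {}"
  using fst_h by (fastforce simp: Dk_def)

lemma Dk_Suc: "Dk (Suc k) = Dk k \<union> blk (Suc k)"
  by (auto simp: Dk_def blk_def)

lemma Dk_blk_disj: "Dk k \<inter> blk (Suc k) = {}"
  by (auto simp: Dk_def blk_def)

lemma Dk_n: "Dk n = {..<d}"
  using fst_h by (auto simp: Dk_def)

lemma finite_Dk: "finite (Dk k)" by (simp add: Dk_def)
lemma finite_blk: "finite (blk k)" by (simp add: blk_def)

lemma Sk_sets: "Sk a k \<in> sets (PiM (Dk k) (\<lambda>_. lborel))"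
proof -
  have [measurable]: "(\<lambda>y. \<Sum>l\<in>blk i. y l) \<in> borel_measurable (PiM (Dk k) (\<lambda>_. lborel :: real measure))"
    if "i \<in> {1..k}" for i
    using that by (intro sum_comp_meas blk_sub) auto
  have "Sk a k = {y \<in> space (PiM (Dk k) (\<lambda>_. lborel)). (\<forall>l\<in>Dk k. 0 \<le> y l) \<and> (\<forall>i\<in>{1..k}. (\<Sum>l\<in>blk i. y l) \<le> real (a i))}"
    by (simp add: Sk_def space_PiM)
  also have "\<dots> \<in> sets (PiM (Dk k) (\<lambda>_. lborel))"
    using finite_Dk by measurable
  finally show ?thesis .
qed

lemma card_blk: "i \<in> {1..n} \<Longrightarrow> card (blk i) = m i - 1"
  using blk_sum[of i "\<lambda>_. 1::nat"] by simp

lemma Sk_measure: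
  "k \<le> n \<Longrightarrow> emeasure (PiM (Dk k) (\<lambda>_. lborel)) (Sk a k) =
     ennreal (\<Prod>i=1..k. real (a i) ^ card (blk i) / fact (card (blk i)))"
proof (induction k)
  case 0
  have "Sk a 0 = {\<lambda>_. undefined}" by (auto simp: Sk_def Dk_0)
  then show ?case by (simp add: Dk_0)
next
  case (Suc k)
  let ?I = "Dk k" and ?B = "blk (Suc k)"
  let ?Simp = "{x. (\<forall>i\<in>?B. 0 \<le> x i) \<and> sum x ?B \<le> real (a (Suc k))} \<inter> space (PiM ?B (\<lambda>_. lborel))"
  have simp_sets: "?Simp \<in> sets (PiM ?B (\<lambda>_. lborel))"
  proof -
    have [measurable]: "(\<lambda>y. \<Sum>l\<in>?B. y l) \<in> borel_measurable (PiM ?B (\<lambda>_. lborel :: real measure))"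
      by (intro sum_comp_meas) auto
    have "?Simp = {x \<in> space (PiM ?B (\<lambda>_. lborel)). (\<forall>i\<in>?B. 0 \<le> x i) \<and> (\<Sum>l\<in>?B. x l) \<le> real (a (Suc k))}"
      by auto
    also have "\<dots> \<in> sets (PiM ?B (\<lambda>_. lborel))" using finite_blk by measurable
    finally show ?thesis .
  qed
  have eq: "Sk a (Suc k) = {x \<in> space (PiM (?I \<union> ?B) (\<lambda>_. lborel)). restrict x ?I \<in> Sk a k \<and> restrict x ?B \<in> ?Simp}"
  proof (intro equalityI subsetI)
    fix x assume x: "x \<in> Sk a (Suc k)"
    have sp: "x \<in> space (PiM (?I \<union> ?B) (\<lambda>_. lborel))" using x by (simp add: Sk_def Dk_Suc space_PiM)
    have "(\<Sum>l\<in>blk i. restrict x ?I l) = (\<Sum>l\<in>blk i. x l)" if "i \<le> k" for i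
      using blk_sub[OF that] by (intro sum.cong) auto
    then have "restrict x ?I \<in> Sk a k" using x by (auto simp: Sk_def Dk_Suc)
    moreover have "restrict x ?B \<in> ?Simp" using x by (auto simp: Sk_def Dk_Suc space_PiM)
    ultimately show "x \<in> {x \<in> space (PiM (?I \<union> ?B) (\<lambda>_. lborel)). restrict x ?I \<in> Sk a k \<and> restrict x ?B \<in> ?Simp}"
      using sp by blast
  next
    fix x assume x: "x \<in> {x \<in> space (PiM (?I \<union> ?B) (\<lambda>_. lborel)). restrict x ?I \<in> Sk a k \<and> restrict x ?B \<in> ?Simp}"
    have sp: "x \<in> PiE (Dk (Suc k)) (\<lambda>_. UNIV)" using x by (simp add: Dk_Suc space_PiM)
    have s1: "(\<Sum>l\<in>blk i. restrict x ?I l) = (\<Sum>l\<in>blk i. x l)" if "i \<le> k" for i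
      using blk_sub[OF that] by (intro sum.cong) auto
    have a1: "\<forall>l\<in>?I. 0 \<le> x l" "\<forall>i\<in>{1..k}. (\<Sum>l\<in>blk i. x l) \<le> real (a i)"
      using x s1 by (auto simp: Sk_def)
    have a2: "\<forall>l\<in>?B. 0 \<le> x l" "(\<Sum>l\<in>?B. x l) \<le> real (a (Suc k))"
      using x by auto
    have "\<forall>i\<in>{1..Suc k}. (\<Sum>l\<in>blk i. x l) \<le> real (a i)"
      using a1(2) a2(2) by (auto simp: le_Suc_eq)
    then show "x \<in> Sk a (Suc k)" using sp a1(1) a2(1) by (auto simp: Sk_def Dk_Suc)
  qed
  have "emeasure (PiM (Dk (Suc k)) (\<lambda>_. lborel)) (Sk a (Suc k)) =
      emeasure (PiM ?I (\<lambda>_. lborel)) (Sk a k) * emeasure (PiM ?B (\<lambda>_. lborel)) ?Simp"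
    unfolding eq Dk_Suc
    by (rule PiM_prod_set[OF Dk_blk_disj finite_Dk finite_blk Sk_sets simp_sets])
  also have "emeasure (PiM ?I (\<lambda>_. lborel)) (Sk a k) =
     ennreal (\<Prod>i=1..k. real (a i) ^ card (blk i) / fact (card (blk i)))"
    using Suc by simp
  also have "emeasure (PiM ?B (\<lambda>_. lborel)) ?Simp = ennreal (real (a (Suc k)) ^ card ?B / fact (card ?B))"
    by (rule emeasure_std_simplex_aux[OF finite_blk]) simp
  also have "ennreal (\<Prod>i=1..k. real (a i) ^ card (blk i) / fact (card (blk i))) *
      ennreal (real (a (Suc k)) ^ card ?B / fact (card ?B)) =
      ennreal (\<Prod>i=1..Suc k. real (a i) ^ card (blk i) / fact (card (blk i)))"
    by (subst ennreal_mult[symmetric]) (auto intro!: prod_nonneg simp: mult.commute)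
  finally show ?case .
qed

definition Sfin :: "(nat \<Rightarrow> nat) \<Rightarrow> (nat \<Rightarrow> real) set" where
  "Sfin a = {y \<in> space (LL d). (\<forall>l<d. 0 \<le> y l) \<and> (\<forall>i\<in>{1..n}. (\<Sum>l\<in>blk i. y l) \<le> real (a i))}"

lemma Sfin_eq: "Sfin a = Sk a n"
  by (auto simp: Sfin_def Sk_def Dk_n space_LL)

lemma Sfin_sets: "Sfin a \<in> sets (LL d)"
  using Sk_sets[of a n] by (simp add: Sfin_eq LL_def Dk_n)

lemma Sfin_measure: "emeasure (LL d) (Sfin a) = ennreal (\<Prod>i=1..n. real (a i) ^ (m i - 1) / fact (m i - 1))"
  using Sk_measure[of n a] by (simp add: Sfin_eq LL_def Dk_n card_blk)

end


context gm
begin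

definition p0 :: "(nat \<Rightarrow> nat) \<Rightarrow> (nat \<times> nat \<Rightarrow> real)" where
  "p0 a = restrict (\<lambda>e. if snd e = 1 then real (a (fst e)) else 0) E"

abbreviation Pa :: "(nat \<Rightarrow> nat) \<Rightarrow> (nat \<times> nat \<Rightarrow> real) set" where
  "Pa a \<equiv> flow_polytope E Gm_tail (Gm_head n) n (\<lambda>k. real (a k))"

lemma P_recon:
  assumes f: "f \<in> Pa a"
  shows "f = restrict (\<lambda>e. phi (psi f) e + p0 a e) E"
proof
  fix e
  have ext: "f \<in> extensional E" using f by (simp add: flow_polytope_def)
  have nf: "\<And>k. k \<in> {1..n} \<Longrightarrow> (\<Sum>j\<in>{1..m k}. f (k, j)) = real (a k)"
    using f netflow_Gm by (simp add: flow_polytope_def)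
  show "f e = restrict (\<lambda>e. phi (psi f) e + p0 a e) E e"
  proof (cases "e \<in> E")
    case True then show ?thesis using recon[OF ext nf True] by (simp add: p0_def)
  next
    case False then show ?thesis using extensional_arb[OF ext False] by simp
  qed
qed

lemma phi_at_Ep:
  assumes e: "e \<in> E" "2 \<le> snd e"
  obtains l where "l < d" "h l = e" "phi y e = y l"
proof -
  have "e \<in> Ep n m" using e by (cases e) (auto simp: E_iff Ep_iff)
  then obtain l where l: "l < d" "h l = e" using hbij by (metis bij_betw_def imageE lessThan_iff)
  then show ?thesis using that phi_at_h[OF l(1)] by blast
qed

lemma psi_P: "psi ` Pa a = Sfin a"
proof (intro equalityI subsetI)
  fix y assume "y \<in> psi ` Pa a"
  then obtain f where f: "f \<in> Pa a" "y = psi f" by auto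
  have nn: "\<forall>e\<in>E. 0 \<le> f e" using f by (simp add: flow_polytope_def)
  have nf: "\<And>k. k \<in> {1..n} \<Longrightarrow> (\<Sum>j\<in>{1..m k}. f (k, j)) = real (a k)"
    using f netflow_Gm by (simp add: flow_polytope_def)
  have "(\<Sum>l\<in>blk i. y l) \<le> real (a i)" if i: "i \<in> {1..n}" for i
  proof -
    have "(\<Sum>l\<in>blk i. y l) = (\<Sum>l\<in>blk i. f (h l))"
      using f by (intro sum.cong) (auto simp: psi_def blk_def)
    also have "\<dots> = (\<Sum>j\<in>{2..m i}. f (i, j))" by (rule blk_sum[OF i])
    also have "\<dots> = real (a i) - f (i, 1)" using nf[OF i] set_1m[OF i] by simp
    also have "\<dots> \<le> real (a i)" using nn mpos'[OF i] i by (auto simp: E_iff)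
    finally show ?thesis .
  qed
  moreover have "\<forall>l<d. 0 \<le> y l" using f nn h_E by (auto simp: psi_def)
  ultimately show "y \<in> Sfin a" using f psi_space by (auto simp: Sfin_def)
next
  fix y assume y: "y \<in> Sfin a"
  define f where "f = restrict (\<lambda>e. phi y e + p0 a e) E"
  have ysp: "y \<in> space (LL d)" using y by (simp add: Sfin_def)
  have "psi f = y"
  proof -
    have "f (h l) = phi y (h l)" if "l < d" for l
      using h_E[OF that] h_snd[OF that] by (simp add: f_def p0_def)
    then have "psi f = psi (phi y)" by (auto simp: psi_def)
    then show ?thesis using psi_phi[OF ysp] by simp
  qed
  moreover have "f \<in> Pa a"
  proof -
    have ext: "f \<in> extensional E" by (simp add: f_def)
    have nn: "0 \<le> f e" if e: "e \<in> E" for e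
    proof (cases "2 \<le> snd e")
      case True
      then obtain l where l: "l < d" "phi y e = y l" using phi_at_Ep[OF e True] by metis
      then show ?thesis using y e True by (auto simp: f_def p0_def Sfin_def)
    next
      case False
      obtain i j where ij: "e = (i, j)" by (cases e)
      then have i: "i \<in> {1..n}" and j: "j = 1" using e False by (auto simp: E_iff)
      have "phi y e = - (\<Sum>l\<in>blk i. y l)" using phi_at_1[OF e] False ij by simp
      then show ?thesis using y i e ij j by (auto simp: f_def p0_def Sfin_def)
    qed
    have nf: "netflow E Gm_tail (Gm_head n) f k = real (a k)" if k: "k \<in> {1..n}" for k
    proof -
      have "netflow E Gm_tail (Gm_head n) f k = (\<Sum>j\<in>{1..m k}. f (k, j))" by (rule netflow_Gm[OF k])
      also have "\<dots> = (\<Sum>j\<in>{1..m k}. phi y (k, j)) + (\<Sum>j\<in>{1..m k}. p0 a (k, j))"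
        using k by (simp add: f_def sum.distrib E_iff)
      also have "(\<Sum>j\<in>{1..m k}. phi y (k, j)) = 0" by (rule phi_netflow[OF k])
      also have "(\<Sum>j\<in>{1..m k}. p0 a (k, j)) = (\<Sum>j\<in>{1..m k}. if j = 1 then real (a k) else 0)"
        using k by (intro sum.cong) (auto simp: p0_def E_iff)
      also have "\<dots> = real (a k)" using mpos'[OF k] by simp
      finally show ?thesis by simp
    qed
    show ?thesis using ext nn nf by (simp add: flow_polytope_def)
  qed
  ultimately show "y \<in> psi ` Pa a" by blast
qed

definition BB :: "(nat \<Rightarrow> nat \<times> nat \<Rightarrow> real) \<Rightarrow> nat \<Rightarrow> nat \<Rightarrow> real" where
  "BB M j l = (\<Sum>e\<in>E. M j e * Phi e (h l))"

lemma matmap_phi: "mat_map d M E (phi y) = linmap d (BB M) y"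
proof -
  have "(\<Sum>e\<in>E. M j e * phi y e) = (\<Sum>l<d. BB M j l * y l)" for j
  proof -
    have "(\<Sum>e\<in>E. M j e * phi y e) = (\<Sum>e\<in>E. \<Sum>l<d. M j e * (Phi e (h l) * y l))"
      by (intro sum.cong refl) (simp add: phi_def sum_distrib_left)
    also have "\<dots> = (\<Sum>l<d. \<Sum>e\<in>E. M j e * (Phi e (h l) * y l))" by (rule sum.swap)
    also have "\<dots> = (\<Sum>l<d. BB M j l * y l)"
      by (simp add: BB_def sum_distrib_right mult.assoc)
    finally show ?thesis .
  qed
  then show ?thesis by (simp add: mat_map_def linmap_def)
qed

lemma chart_props:
  assumes ch: "lattice_chart d M E V"
  shows "bij_betw (linmap d (BB M)) (space (LL d)) (space (LL d))"
    "linmap d (BB M) ` Zd d = Zd d"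
proof -
  have b1: "bij_betw (mat_map d M E) V (space (LL d))" using ch by (simp add: lattice_chart_def space_LL)
  have "bij_betw (mat_map d M E \<circ> phi) (space (LL d)) (space (LL d))"
    by (rule bij_betw_trans[OF phi_bij b1])
  moreover have "mat_map d M E \<circ> phi = linmap d (BB M)" by (simp add: fun_eq_iff matmap_phi)
  ultimately show "bij_betw (linmap d (BB M)) (space (LL d)) (space (LL d))" by simp
  have "linmap d (BB M) ` Zd d = mat_map d M E ` phi ` Zd d"
    by (simp add: image_image matmap_phi)
  also have "\<dots> = mat_map d M E ` {f\<in>V. \<forall>e\<in>E. f e \<in> \<int>}" by (simp only: phi_Zd)
  also have "\<dots> = Zd d" using ch by (simp add: lattice_chart_def Zd_def)
  finally show "linmap d (BB M) ` Zd d = Zd d" .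
qed

lemma matmap_add: "mat_map d M E (restrict (\<lambda>e. g e + p e) E) = transl d (mat_map d M E p) (mat_map d M E g)"
  by (auto simp: mat_map_def transl_def fun_eq_iff distrib_left sum.distrib add.commute)

lemma image_P:
  assumes ch: "lattice_chart d M E V"
  shows "mat_map d M E ` Pa a = transl d (mat_map d M E (p0 a)) ` linmap d (BB M) ` Sfin a"
proof -
  have "mat_map d M E f = transl d (mat_map d M E (p0 a)) (linmap d (BB M) (psi f))" if "f \<in> Pa a" for f
    using P_recon[OF that] matmap_add[of M "phi (psi f)" "p0 a"] matmap_phi by metis
  then have "mat_map d M E ` Pa a = (\<lambda>f. transl d (mat_map d M E (p0 a)) (linmap d (BB M) (psi f))) ` Pa a"
    by (rule image_cong[OF refl])
  also have "\<dots> = transl d (mat_map d M E (p0 a)) ` linmap d (BB M) ` psi ` Pa a"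
    by (simp add: image_image)
  finally show ?thesis by (simp add: psi_P)
qed

lemma vol_P:
  assumes ch: "lattice_chart d M E V"
  shows "emeasure (LL d) (mat_map d M E ` Pa a) = ennreal (\<Prod>i=1..n. real (a i) ^ (m i - 1) / fact (m i - 1))"
proof -
  note u = unimod[OF chart_props[OF ch] Sfin_sets]
  have "emeasure (LL d) (mat_map d M E ` Pa a) = emeasure (LL d) (linmap d (BB M) ` Sfin a)"
    unfolding image_P[OF ch] by (rule LL_transl_image[OF u(1)])
  also have "\<dots> = emeasure (LL d) (Sfin a)" by (rule u(2))
  finally show ?thesis by (simp add: Sfin_measure)
qed

end


theorem lemma3p8:
  fixes n :: nat and m a :: "nat \<Rightarrow> nat"
  assumes "\<forall>i\<in>{1..n}. 0 < m i"
  shows "rel_norm_volume (card (Gm_edges n m) - n) (Gm_edges n m)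
           (flow_dir (Gm_edges n m) Gm_tail (Gm_head n) n)
           (flow_polytope (Gm_edges n m) Gm_tail (Gm_head n) n (\<lambda>k. real (a k)))
         = multinomial n (\<lambda>i. m i - 1) * (\<Prod>i=1..n. real (a i) ^ (m i - 1))"
proof -
  obtain h where h: "bij_betw h {0..<card (Ep n m)} (Ep n m)"
    using ex_bij_betw_nat_finite[OF finite_Ep] by blast
  interpret gm n m h
    by standard (use assms h in \<open>simp_all add: atLeast0LessThan\<close>)
  have dd: "card (Gm_edges n m) - n = d" by (rule card_Gm_minus[OF assms])
  have "\<exists>M. lattice_chart d M E V" using chart_M0 by blast
  then have ch: "lattice_chart d (SOME M. lattice_chart d M E V) E V" by (rule someI_ex)
  let ?pr = "\<Prod>i=1..n. real (a i) ^ (m i - 1) / fact (m i - 1)"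
  have pr0: "0 \<le> ?pr" by (intro prod_nonneg) auto
  have "rel_norm_volume d E V (Pa a) = fact d * measure (LL d) (mat_map d (SOME M. lattice_chart d M E V) E ` Pa a)"
    by (simp add: rel_norm_volume_def LL_def)
  also have "measure (LL d) (mat_map d (SOME M. lattice_chart d M E V) E ` Pa a) = ?pr"
    using vol_P[OF ch, of a] pr0 by (simp add: measure_def)
  also have "fact d * ?pr = multinomial n (\<lambda>i. m i - 1) * (\<Prod>i=1..n. real (a i) ^ (m i - 1))"
    by (simp add: multinomial_def card_Ep prod_dividef)
  finally show ?thesis by (simp add: dd)
qed


end
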